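(* Let $\ell\in\mathbb R\setminus\{0\}$ and $\sigma>0$. For $(a,b)\in\mathbb R^2$ let $\mathcal N_{(a,b),\sigma}$ be the Borel probability measure on $\mathbb R^2$ with density $p(a',b')=\frac{1}{2\pi\sigma^2}\exp\!\big(-\frac{(a-a')^2+(b-b')^2}{2\sigma^2}\big)$. Define, for $x,y\in\{0,1\}$, $$\mu_{x,y}=\tfrac12\big[\mathcal N_{(\ell,(-1)^{xy}\ell),\sigma}+\mathcal N_{(-\ell,-(-1)^{xy}\ell),\sigma}\big].$$ Then $\boldsymbol\mu=(\mu_{x,y})_{x,y\in\{0,1\}}$ is a no-signaling behaviour, and, writing $\langle A_x^{m}B_y^{n}\rangle=\int_{\mathbb R^2}a^m b^n\,d\mu_{x,y}(a,b)$, $$\big[\langle A_0B_0\rangle-\langle A_1B_1\rangle\big]^2+\big[\langle A_0B_1\rangle+\langle A_1B_0\rangle\big]^2-\sum_{x,y\in\{0,1\}}\langle A_x^2B_y^2\rangle = 8\ell^4-4(\sigma^2+\ell^2)^2 .$$ In particular, $\boldsymbol\mu$ violates the CFRD inequality $\big[\langle A_0B_0\rangle-\langle A_1B_1\rangle\big]^2+\big[\langle A_0B_1\rangle+\langle A_1B_0\rangle\big]^2\le \sum_{x,y}\langle A_x^2B_y^2\rangle$ if and only if $|\ell|/\sigma>\sqrt{1+\sqrt2}$.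
   Context: A behaviour is a family $\boldsymbol\mu=(\mu_{x,y})_{x,y\in\{0,1\}}$ of Borel probability measures on $\mathbb R\times\mathbb R$ (input $x$ for Alice, $y$ for Bob; first coordinate is Alice's output, second Bob's). It is no-signaling if $\mu_{x,0}(A\times\mathbb R)=\mu_{x,1}(A\times\mathbb R)$ for all $x$ and Borel $A\subseteq\mathbb R$, and $\mu_{0,y}(\mathbb R\times B)=\mu_{1,y}(\mathbb R\times B)$ for all $y$ and Borel $B\subseteq\mathbb R$. *)

theory Defs
  imports "HOL-Probability.Probability"
begin

definition gauss2_density :: "real \<Rightarrow> real \<Rightarrow> real \<Rightarrow> real \<times> real \<Rightarrow> real" where
  "gauss2_density a b s = (\<lambda>(a', b'). 1 / (2 * pi * s^2) * exp (- ((a - a')^2 + (b - b')^2) / (2 * s^2)))"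

definition gauss2 :: "real \<Rightarrow> real \<Rightarrow> real \<Rightarrow> (real \<times> real) measure" where
  "gauss2 a b s = density lborel (\<lambda>z. ennreal (gauss2_density a b s z))"

definition half_mix :: "'a measure \<Rightarrow> 'a measure \<Rightarrow> 'a measure" where
  "half_mix M N = measure_of (space M) (sets M) (\<lambda>A. (emeasure M A + emeasure N A) / 2)"

definition behaviour :: "(nat \<Rightarrow> nat \<Rightarrow> (real \<times> real) measure) \<Rightarrow> bool" where
  "behaviour \<mu> \<longleftrightarrow> (\<forall>x\<in>{0,1}. \<forall>y\<in>{0,1}. prob_space (\<mu> x y) \<and> sets (\<mu> x y) = sets borel)"

definition no_signaling :: "(nat \<Rightarrow> nat \<Rightarrow> (real \<times> real) measure) \<Rightarrow> bool" where
  "no_signaling \<mu> \<longleftrightarrow>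
     (\<forall>x\<in>{0,1}. \<forall>A\<in>sets (borel :: real measure). emeasure (\<mu> x 0) (A \<times> UNIV) = emeasure (\<mu> x 1) (A \<times> UNIV)) \<and>
     (\<forall>y\<in>{0,1}. \<forall>B\<in>sets (borel :: real measure). emeasure (\<mu> 0 y) (UNIV \<times> B) = emeasure (\<mu> 1 y) (UNIV \<times> B))"

definition moment :: "(nat \<Rightarrow> nat \<Rightarrow> (real \<times> real) measure) \<Rightarrow> nat \<Rightarrow> nat \<Rightarrow> nat \<Rightarrow> nat \<Rightarrow> real" where
  "moment \<mu> x y m n = (\<integral>(a, b). a ^ m * b ^ n \<partial>(\<mu> x y))"

definition gauss_behaviour :: "real \<Rightarrow> real \<Rightarrow> nat \<Rightarrow> nat \<Rightarrow> (real \<times> real) measure" where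
  "gauss_behaviour l s x y =
     half_mix (gauss2 l ((-1) ^ (x * y) * l) s) (gauss2 (- l) (- ((-1) ^ (x * y) * l)) s)"

end

theory Submission
  imports Defs
begin





abbreviation Nd :: "real \<Rightarrow> real \<Rightarrow> real measure" where
  "Nd a s \<equiv> density lborel (\<lambda>x. ennreal (normal_density a s x))"

lemma gauss2_density_eq:
  assumes "s > 0"
  shows "gauss2_density a b s (x, y) = normal_density a s x * normal_density b s y"
proof -
  have q: "sqrt (2 * pi * s\<^sup>2) * sqrt (2 * pi * s\<^sup>2) = 2 * pi * s\<^sup>2"
    using assms by (simp add: real_sqrt_mult_self)
  have c: "1 / (2 * pi * s\<^sup>2) = 1 / sqrt (2 * pi * s\<^sup>2) * (1 / sqrt (2 * pi * s\<^sup>2))"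
    by (simp add: q)
  have d: "- ((a - x)\<^sup>2 + (b - y)\<^sup>2) / (2 * s\<^sup>2) = - (x - a)\<^sup>2 / (2 * s\<^sup>2) + - (y - b)\<^sup>2 / (2 * s\<^sup>2)"
    by (simp add: power2_commute[of a x] power2_commute[of b y] diff_divide_distrib)
  show ?thesis
    unfolding gauss2_density_def normal_density_def prod.case d exp_add c
    by (simp only: mult_ac)
qed

lemma gauss2_eq:
  assumes "s > 0"
  shows "gauss2 a b s = Nd a s \<Otimes>\<^sub>M Nd b s"
proof -
  have "Nd a s \<Otimes>\<^sub>M Nd b s = density (lborel \<Otimes>\<^sub>M lborel) (\<lambda>(x,y). ennreal (normal_density a s x) * ennreal (normal_density b s y))"
    by (rule pair_measure_density) (auto intro: prob_space_imp_sigma_finite prob_space_normal_density assms lborel.sigma_finite_measure_axioms)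
  also have "\<dots> = density lborel (\<lambda>z. ennreal (gauss2_density a b s z))"
    unfolding lborel_prod
    by (rule arg_cong[where f="density lborel"]) (auto simp: fun_eq_iff gauss2_density_eq[OF assms] ennreal_mult'')
  finally show ?thesis unfolding gauss2_def ..
qed

lemma Nd_prob: "s > 0 \<Longrightarrow> prob_space (Nd a s)"
  by (rule prob_space_normal_density)

lemma emeasure_gauss2_Times:
  assumes "s > 0" "A \<in> sets borel" "B \<in> sets borel"
  shows "emeasure (gauss2 a b s) (A \<times> B) = emeasure (Nd a s) A * emeasure (Nd b s) B"
proof -
  interpret P: prob_space "Nd b s" using Nd_prob[OF assms(1)] .
  show ?thesis unfolding gauss2_eq[OF assms(1)]
    by (rule P.emeasure_pair_measure_Times) (use assms in auto)
qed

lemma emeasure_Nd_UNIV: "s > 0 \<Longrightarrow> emeasure (Nd a s) UNIV = 1"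
  using prob_space.emeasure_space_1[OF Nd_prob, of s a] by simp

lemma gauss2_prod_integral:
  fixes p q :: "real \<Rightarrow> real"
  assumes s: "s > 0" and [measurable]: "p \<in> borel_measurable borel" "q \<in> borel_measurable borel"
    and ip: "integrable (Nd a s) p" and iq: "integrable (Nd b s) q"
  shows "integrable (gauss2 a b s) (\<lambda>(x,y). p x * q y)"
    and "(\<integral>(x,y). p x * q y \<partial>gauss2 a b s) = (\<integral>x. p x \<partial>Nd a s) * (\<integral>y. q y \<partial>Nd b s)"
proof -
  interpret P1: prob_space "Nd a s" using Nd_prob[OF s] .
  interpret P2: prob_space "Nd b s" using Nd_prob[OF s] .
  interpret PP: pair_sigma_finite "Nd a s" "Nd b s" by unfold_locales
  have int: "integrable (Nd a s \<Otimes>\<^sub>M Nd b s) (\<lambda>(x,y). p x * q y)"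
  proof (rule PP.Fubini_integrable)
    show "(\<lambda>(x,y). p x * q y) \<in> borel_measurable (Nd a s \<Otimes>\<^sub>M Nd b s)" by measurable
    have "integrable (Nd a s) (\<lambda>x. norm (p x) * (\<integral>y. norm (q y) \<partial>Nd b s))"
      using ip by (intro integrable_mult_left integrable_norm)
    then show "integrable (Nd a s) (\<lambda>x. \<integral>y. norm (case (x, y) of (x, y) \<Rightarrow> p x * q y) \<partial>Nd b s)"
      by (simp add: abs_mult)
    show "AE x in Nd a s. integrable (Nd b s) (\<lambda>y. case (x, y) of (x, y) \<Rightarrow> p x * q y)"
      using iq by (auto intro: integrable_mult_right)
  qed
  then show "integrable (gauss2 a b s) (\<lambda>(x,y). p x * q y)" unfolding gauss2_eq[OF s] .
  have "(\<integral>x. (\<integral>y. p x * q y \<partial>Nd b s) \<partial>Nd a s) = integral\<^sup>L (Nd a s \<Otimes>\<^sub>M Nd b s) (\<lambda>(x,y). p x * q y)"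
    by (rule PP.integral_fst) (use int in simp)
  then show "(\<integral>(x,y). p x * q y \<partial>gauss2 a b s) = (\<integral>x. p x \<partial>Nd a s) * (\<integral>y. q y \<partial>Nd b s)"
    unfolding gauss2_eq[OF s] by simp
qed

lemma Nd_mom1:
  assumes s: "s > 0"
  shows "integrable (Nd a s) (\<lambda>x. x)" "(\<integral>x. x \<partial>Nd a s) = a"
proof -
  show "integrable (Nd a s) (\<lambda>x. x)"
    by (subst integrable_density) (use integrable_normal_moment_nz_1[OF s, of a] in auto)
  show "(\<integral>x. x \<partial>Nd a s) = a"
    by (subst integral_density) (use integral_normal_moment_nz_1[OF s, of a] in auto)
qed

lemma Nd_mom2:
  assumes s: "s > 0"
  shows "integrable (Nd a s) (\<lambda>x. x^2)" "(\<integral>x. x^2 \<partial>Nd a s) = a^2 + s^2"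
proof -
  have eq: "(\<lambda>x. normal_density a s x * x^2) = (\<lambda>x. normal_density a s x * (x - a)^(2*1) + 2 * a * (normal_density a s x * x) - a^2 * normal_density a s x)"
    by (auto simp: fun_eq_iff power2_eq_square algebra_simps)
  have i1: "integrable lborel (\<lambda>x. normal_density a s x * (x - a)^(2*1))"
    using integrable_normal_moment[OF s, of a "2*1"] .
  have i2: "integrable lborel (\<lambda>x. normal_density a s x * x)"
    using integrable_normal_moment_nz_1[OF s, of a] .
  have i3: "integrable lborel (\<lambda>x. normal_density a s x)"
    using integrable_normal_density[OF s, of a] .
  have I: "integrable lborel (\<lambda>x. normal_density a s x * x^2)"
    unfolding eq by (rule Bochner_Integration.integrable_diff[OF Bochner_Integration.integrable_add[OF i1 integrable_mult_right[OF i2]] integrable_mult_right[OF i3]])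
  show "integrable (Nd a s) (\<lambda>x. x^2)"
    by (subst integrable_density) (use I in auto)
  have "(\<integral>x. normal_density a s x * x^2 \<partial>lborel) = s^2 + 2 * a * a - a^2 * 1"
    unfolding eq
    using i1 i2 i3 integral_normal_moment_even[OF s, of a 1] integral_normal_moment_nz_1[OF s, of a]
      integral_normal_density[OF s, of a]
    by (simp add: Bochner_Integration.integral_diff Bochner_Integration.integral_add)
  then show "(\<integral>x. x^2 \<partial>Nd a s) = a^2 + s^2"
    by (subst integral_density) (auto simp: power2_eq_square)
qed

lemma half_mix_emeasure_fun:
  fixes f g :: "'a \<Rightarrow> real"
  assumes [measurable]: "f \<in> borel_measurable M" "g \<in> borel_measurable M"
    and nn: "\<And>x. f x \<ge> 0" "\<And>x. g x \<ge> 0"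
  shows "(\<lambda>A. (emeasure (density M f) A + emeasure (density M g) A) / 2)
       = emeasure (density M (\<lambda>x. (f x + g x) / 2))"
proof
  fix A
  show "(emeasure (density M f) A + emeasure (density M g) A) / 2 = emeasure (density M (\<lambda>x. (f x + g x) / 2)) A"
  proof (cases "A \<in> sets M")
    case True
    have e: "\<And>x. ennreal ((f x + g x) / 2) * indicator A x = (ennreal (f x) * indicator A x + ennreal (g x) * indicator A x) / 2"
    proof -
      fix x
      have "ennreal ((f x + g x) / 2) = (ennreal (f x) + ennreal (g x)) / 2"
        using nn[of x] by (simp add: divide_ennreal[symmetric] ennreal_plus)
      then show "ennreal ((f x + g x) / 2) * indicator A x = (ennreal (f x) * indicator A x + ennreal (g x) * indicator A x) / 2"
        by (simp add: divide_ennreal_def distrib_left distrib_right mult.commute mult.left_commute)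
    qed
    show ?thesis using True
      by (simp add: emeasure_density e nn_integral_divide nn_integral_add)
  next
    case False
    then show ?thesis by (simp add: emeasure_notin_sets)
  qed
qed

lemma half_mix_density:
  fixes f g :: "'a \<Rightarrow> real"
  assumes [measurable]: "f \<in> borel_measurable M" "g \<in> borel_measurable M"
    and nn: "\<And>x. f x \<ge> 0" "\<And>x. g x \<ge> 0"
  shows "half_mix (density M f) (density M g) = density M (\<lambda>x. (f x + g x) / 2)"
  unfolding half_mix_def half_mix_emeasure_fun[OF assms]
  by (metis measure_of_of_measure space_density sets_density)

lemma half_mix_integral:
  fixes f g :: "'a \<Rightarrow> real" and h :: "'a \<Rightarrow> real"
  assumes [measurable]: "f \<in> borel_measurable M" "g \<in> borel_measurable M" "h \<in> borel_measurable M"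
    and nn: "\<And>x. f x \<ge> 0" "\<And>x. g x \<ge> 0"
    and i1: "integrable (density M f) h" and i2: "integrable (density M g) h"
  shows "integral\<^sup>L (half_mix (density M f) (density M g)) h
       = (integral\<^sup>L (density M f) h + integral\<^sup>L (density M g) h) / 2"
proof -
  have j1: "integrable M (\<lambda>x. f x * h x)" using i1 nn by (subst (asm) integrable_density) auto
  have j2: "integrable M (\<lambda>x. g x * h x)" using i2 nn by (subst (asm) integrable_density) auto
  have "integral\<^sup>L (half_mix (density M f) (density M g)) h = (\<integral>x. (f x + g x) / 2 * h x \<partial>M)"
    unfolding half_mix_density[OF assms(1,2) nn] using nn
    by (subst integral_density) (auto intro!: add_nonneg_nonneg)
  also have "\<dots> = (\<integral>x. (f x * h x + g x * h x) / 2 \<partial>M)"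
    by (rule Bochner_Integration.integral_cong) (auto simp: field_simps)
  also have "\<dots> = ((\<integral>x. f x * h x \<partial>M) + (\<integral>x. g x * h x \<partial>M)) / 2"
    using j1 j2 by (simp add: Bochner_Integration.integral_add)
  also have "\<dots> = (integral\<^sup>L (density M f) h + integral\<^sup>L (density M g) h) / 2"
    using nn by (simp add: integral_density)
  finally show ?thesis .
qed

lemma gauss2_density_meas[measurable]: "gauss2_density a b s \<in> borel_measurable borel"
proof -
  have "gauss2_density a b s = (\<lambda>z. 1 / (2 * pi * s^2) * exp (- ((a - fst z)^2 + (b - snd z)^2) * (1 / (2 * s^2))))"
    unfolding gauss2_density_def by (auto simp: fun_eq_iff)
  also have "\<dots> \<in> borel_measurable borel"
    by (intro borel_measurable_continuous_onI continuous_intros)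
  finally show ?thesis .
qed

lemma gauss2_density_nn: "gauss2_density a b s z \<ge> 0"
  unfolding gauss2_density_def by (auto simp: case_prod_beta)



lemma mix_emeasure:
  "emeasure (half_mix (gauss2 a b s) (gauss2 a' b' s)) E = (emeasure (gauss2 a b s) E + emeasure (gauss2 a' b' s) E) / 2"
proof -
  have "emeasure (half_mix (gauss2 a b s) (gauss2 a' b' s)) E
     = emeasure (density lborel (\<lambda>x. (gauss2_density a b s x + gauss2_density a' b' s x) / 2)) E"
    unfolding gauss2_def by (subst half_mix_density) (auto simp: gauss2_density_nn)
  also have "\<dots> = (emeasure (gauss2 a b s) E + emeasure (gauss2 a' b' s) E) / 2"
    unfolding gauss2_def
    by (subst half_mix_emeasure_fun[symmetric]) (auto simp: gauss2_density_nn)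
  finally show ?thesis .
qed

lemma mix_prob:
  assumes s: "s > 0"
  shows "prob_space (half_mix (gauss2 a b s) (gauss2 a' b' s))"
    "sets (half_mix (gauss2 a b s) (gauss2 a' b' s)) = sets borel"
proof -
  have eq: "half_mix (gauss2 a b s) (gauss2 a' b' s) = density lborel (\<lambda>x. (gauss2_density a b s x + gauss2_density a' b' s x) / 2)"
    unfolding gauss2_def by (subst half_mix_density) (auto simp: gauss2_density_nn)
  show "sets (half_mix (gauss2 a b s) (gauss2 a' b' s)) = sets borel" unfolding eq by simp
  have u: "UNIV = UNIV \<times> (UNIV :: real set)" by simp
  have g1: "emeasure (gauss2 c d s) UNIV = 1" for c d
    using emeasure_gauss2_Times[OF s, of UNIV UNIV c d] by (simp add: emeasure_Nd_UNIV[OF s])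
  show "prob_space (half_mix (gauss2 a b s) (gauss2 a' b' s))"
  proof
    have "space (half_mix (gauss2 a b s) (gauss2 a' b' s)) = UNIV" unfolding eq by simp
    then show "emeasure (half_mix (gauss2 a b s) (gauss2 a' b' s)) (space (half_mix (gauss2 a b s) (gauss2 a' b' s))) = 1"
      by (simp add: mix_emeasure g1 ennreal_divide_self)
  qed
qed

lemma gauss2_Times_UNIV:
  assumes s: "s > 0" and "A \<in> sets borel"
  shows "emeasure (gauss2 a b s) (A \<times> UNIV) = emeasure (Nd a s) A"
    "emeasure (gauss2 a b s) (UNIV \<times> A) = emeasure (Nd b s) A"
  using assms by (simp_all add: emeasure_gauss2_Times emeasure_Nd_UNIV)



lemma mix_moment:
  assumes s: "s > 0"
    and i: "integrable (Nd a s) (\<lambda>x. x^m)" "integrable (Nd b s) (\<lambda>x. x^n)"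
     "integrable (Nd a' s) (\<lambda>x. x^m)" "integrable (Nd b' s) (\<lambda>x. x^n)"
  shows "(\<integral>(x,y). x^m * y^n \<partial>half_mix (gauss2 a b s) (gauss2 a' b' s))
     = ((\<integral>x. x^m \<partial>Nd a s) * (\<integral>y. y^n \<partial>Nd b s) + (\<integral>x. x^m \<partial>Nd a' s) * (\<integral>y. y^n \<partial>Nd b' s)) / 2"
proof -
  have I1: "integrable (gauss2 a b s) (\<lambda>(x,y). x^m * y^n)"
    using gauss2_prod_integral(1)[OF s _ _ i(1,2)] by simp
  have I2: "integrable (gauss2 a' b' s) (\<lambda>(x,y). x^m * y^n)"
    using gauss2_prod_integral(1)[OF s _ _ i(3,4)] by simp
  have hm: "(\<lambda>(x,y). x^m * y^n) \<in> borel_measurable (borel :: (real \<times> real) measure)"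
  proof -
    have "(\<lambda>z::real\<times>real. fst z ^ m * snd z ^ n) \<in> borel_measurable borel"
      by (intro borel_measurable_continuous_onI continuous_intros)
    then show ?thesis by (simp add: case_prod_beta')
  qed
  have "(\<integral>(x,y). x^m * y^n \<partial>half_mix (gauss2 a b s) (gauss2 a' b' s))
      = ((\<integral>(x,y). x^m * y^n \<partial>gauss2 a b s) + (\<integral>(x,y). x^m * y^n \<partial>gauss2 a' b' s)) / 2"
    unfolding gauss2_def
    by (rule half_mix_integral[where M=lborel])
       (simp_all only: measurable_lborel2 hm gauss2_density_nn gauss2_density_meas I1[unfolded gauss2_def] I2[unfolded gauss2_def])
  also have "\<dots> = ((\<integral>x. x^m \<partial>Nd a s) * (\<integral>y. y^n \<partial>Nd b s) + (\<integral>x. x^m \<partial>Nd a' s) * (\<integral>y. y^n \<partial>Nd b' s)) / 2"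
    using gauss2_prod_integral(2)[OF s _ _ i(1,2)] gauss2_prod_integral(2)[OF s _ _ i(3,4)] by simp
  finally show ?thesis .
qed

lemma mix_mom11:
  assumes s: "s > 0"
  shows "(\<integral>(x,y). x^1 * y^1 \<partial>half_mix (gauss2 a b s) (gauss2 (-a) (-b) s)) = a * b"
proof -
  have i: "integrable (Nd c s) (\<lambda>x. x^1)" for c using Nd_mom1(1)[OF s, of c] by simp
  have v: "(\<integral>x. x^1 \<partial>Nd c s) = c" for c using Nd_mom1(2)[OF s, of c] by simp
  have "(\<integral>(x,y). x^1 * y^1 \<partial>half_mix (gauss2 a b s) (gauss2 (-a) (-b) s)) = (a * b + (-a) * (-b)) / 2"
    by (simp only: mix_moment[OF s i i i i] v)
  also have "\<dots> = a * b" by simp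
  finally show ?thesis .
qed

lemma mix_mom22:
  assumes s: "s > 0"
  shows "(\<integral>(x,y). x^2 * y^2 \<partial>half_mix (gauss2 a b s) (gauss2 (-a) (-b) s)) = (a^2 + s^2) * (b^2 + s^2)"
proof -
  have "(\<integral>(x,y). x^2 * y^2 \<partial>half_mix (gauss2 a b s) (gauss2 (-a) (-b) s))
      = ((a^2 + s^2) * (b^2 + s^2) + ((-a)^2 + s^2) * ((-b)^2 + s^2)) / 2"
    by (simp only: mix_moment[OF s Nd_mom2(1)[OF s] Nd_mom2(1)[OF s] Nd_mom2(1)[OF s] Nd_mom2(1)[OF s]] Nd_mom2(2)[OF s])
  also have "\<dots> = (a^2 + s^2) * (b^2 + s^2)" by simp
  finally show ?thesis .
qed

lemma gb_mom11:
  assumes s: "s > 0"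
  shows "moment (gauss_behaviour l s) x y 1 1 = (-1)^(x*y) * l^2"
  unfolding moment_def gauss_behaviour_def mix_mom11[OF s]
  by (simp add: power2_eq_square)

lemma gb_mom22:
  assumes s: "s > 0"
  shows "moment (gauss_behaviour l s) x y 2 2 = (l^2 + s^2)^2"
proof -
  have "((-1::real)^(x*y))^2 = 1"
    by (cases "even (x*y)") (simp_all add: neg_one_even_power neg_one_odd_power)
  then have e: "((-1::real)^(x*y) * l)^2 = l^2" by (simp add: power_mult_distrib)
  show ?thesis
    unfolding moment_def gauss_behaviour_def mix_mom22[OF s] e
    by (simp add: power2_eq_square)
qed

lemma ineq:
  fixes l s :: real
  assumes "l \<noteq> 0" "s > 0"
  shows "4 * (s^2 + l^2)^2 < 8 * l^4 \<longleftrightarrow> \<bar>l\<bar> / s > sqrt (1 + sqrt 2)"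
proof -
  define L where "L = l^2"
  define S where "S = s^2"
  have L: "L > 0" using assms unfolding L_def by simp
  have S: "S > 0" using assms unfolding S_def by simp
  have r2: "sqrt 2 * sqrt 2 = (2::real)" by simp
  have r2p: "sqrt 2 > (1::real)" by simp
  have p1: "(sqrt 2 * L)^2 = 2 * L^2" by (simp add: power_mult_distrib)
  have p2: "l^4 = L^2" unfolding L_def by simp
  have "4 * (s^2 + l^2)^2 < 8 * l^4 \<longleftrightarrow> (L + S)^2 < (sqrt 2 * L)^2"
    unfolding p1 p2 unfolding L_def S_def by (simp add: add.commute)
  also have "\<dots> \<longleftrightarrow> L + S < sqrt 2 * L"
  proof -
    have "(sqrt 2 * L)^2 \<le> (L + S)^2 \<longleftrightarrow> sqrt 2 * L \<le> L + S"
      by (rule power_mono_iff) (use L S in auto)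
    then show ?thesis by (simp add: not_le[symmetric])
  qed
  also have "\<dots> \<longleftrightarrow> S * (1 + sqrt 2) < L"
  proof
    assume h: "L + S < sqrt 2 * L"
    then have "S < (sqrt 2 - 1) * L" by (simp add: algebra_simps)
    then have "S * (1 + sqrt 2) < (sqrt 2 - 1) * L * (1 + sqrt 2)"
      by (rule mult_strict_right_mono) (use r2p in linarith)+
    also have "\<dots> = L" using r2 by (simp add: algebra_simps)
    finally show "S * (1 + sqrt 2) < L" .
  next
    assume h: "S * (1 + sqrt 2) < L"
    then have "S * (1 + sqrt 2) * (sqrt 2 - 1) < L * (sqrt 2 - 1)"
      by (rule mult_strict_right_mono) (use r2p in linarith)+
    also have "S * (1 + sqrt 2) * (sqrt 2 - 1) = S" using r2 by (simp add: algebra_simps)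
    finally show "L + S < sqrt 2 * L" by (simp add: algebra_simps)
  qed
  also have "\<dots> \<longleftrightarrow> 1 + sqrt 2 < L / S"
    using S by (simp add: pos_less_divide_eq mult.commute)
  also have "L / S = (\<bar>l\<bar> / s)^2" unfolding L_def S_def by (simp add: power_divide)
  also have "1 + sqrt 2 < (\<bar>l\<bar> / s)^2 \<longleftrightarrow> sqrt (1 + sqrt 2) < sqrt ((\<bar>l\<bar> / s)^2)"
    by (rule real_sqrt_less_iff[symmetric])
  also have "sqrt ((\<bar>l\<bar> / s)^2) = \<bar>l\<bar> / s" using assms by simp
  finally show ?thesis .
qed

theorem mainTheorem1:
  fixes l \<sigma> :: real
  assumes "l \<noteq> 0" and "\<sigma> > 0"
  defines "\<mu> \<equiv> gauss_behaviour l \<sigma>"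
  shows "behaviour \<mu> \<and> no_signaling \<mu>
    \<and> (moment \<mu> 0 0 1 1 - moment \<mu> 1 1 1 1)^2 + (moment \<mu> 0 1 1 1 + moment \<mu> 1 0 1 1)^2
        - (\<Sum>x\<in>{0,1}. \<Sum>y\<in>{0,1}. moment \<mu> x y 2 2) = 8 * l^4 - 4 * (\<sigma>^2 + l^2)^2
    \<and> ((moment \<mu> 0 0 1 1 - moment \<mu> 1 1 1 1)^2 + (moment \<mu> 0 1 1 1 + moment \<mu> 1 0 1 1)^2
          > (\<Sum>x\<in>{0,1::nat}. \<Sum>y\<in>{0,1::nat}. moment \<mu> x y 2 2)
        \<longleftrightarrow> \<bar>l\<bar> / \<sigma> > sqrt (1 + sqrt 2))"
proof -
  note s = assms(2)
  have beh: "behaviour \<mu>"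
    unfolding behaviour_def \<mu>_def gauss_behaviour_def using mix_prob[OF s] by blast
  have ns: "no_signaling \<mu>"
    unfolding no_signaling_def \<mu>_def gauss_behaviour_def
    by (auto simp: mix_emeasure gauss2_Times_UNIV[OF s] add.commute)
  have m11: "moment \<mu> x y 1 1 = (-1)^(x*y) * l^2" for x y
    unfolding \<mu>_def by (rule gb_mom11[OF s])
  have m22: "moment \<mu> x y 2 2 = (l^2 + \<sigma>^2)^2" for x y
    unfolding \<mu>_def by (rule gb_mom22[OF s])
  have a: "moment \<mu> 0 0 1 1 = l^2" using m11[of 0 0] by simp
  have b: "moment \<mu> 1 1 1 1 = -(l^2)" using m11[of 1 1] by simp
  have c: "moment \<mu> 0 1 1 1 = l^2" using m11[of 0 1] by simp
  have d: "moment \<mu> 1 0 1 1 = l^2" using m11[of 1 0] by simp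
  have LHS: "(moment \<mu> 0 0 1 1 - moment \<mu> 1 1 1 1)^2 + (moment \<mu> 0 1 1 1 + moment \<mu> 1 0 1 1)^2 = 8 * l^4"
    unfolding a b c d by (simp add: power2_eq_square power4_eq_xxxx)
  have RHS: "(\<Sum>x\<in>{0,1::nat}. \<Sum>y\<in>{0,1::nat}. moment \<mu> x y 2 2) = 4 * (\<sigma>^2 + l^2)^2"
    by (simp add: m22 add.commute)
  show ?thesis
    unfolding LHS RHS by (intro conjI beh ns refl ineq[OF assms(1,2)])
qed

end
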